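(* For any constants $z'\in[0,1]$ and $\alpha'>0$, the set $S_{z',\alpha'}=\{(x_1,\dots,x_n)\in[0,1]^n:\max_{i\in\mathcal V}|x_i-z'|<\alpha'\}$ is finite-time robustly reachable from $[0,1]^n$ under both control protocols (C1) and (C3).
   Context: Fix $n\ge3$, $\mathcal V=\{1,\dots,n\}$, confidence thresholds $r_i\in(0,1]$, belief factors $\omega_i\in(0,1)$, $\eta>0$. States $x(t)=(x_1(t),\dots,x_n(t))\in[0,1]^n$. Neighbor set $\mathcal N_i(t)=\{j:|x_j(t)-x_i(t)|\le r_i\}$ (contains $i$), $\Pi_{[0,1]}(y)=\min\{1,\max\{0,y\}\}$, $x_{\rm ave}(t)=\frac1n\sum_ix_i(t)$. Control protocol (C1): $x_i(t+1)=\Pi_{[0,1]}\big(|\mathcal N_i(t)|^{-1}\sum_{j\in\mathcal N_i(t)}x_j(t)+u_i(t)+b_i(t)\big)$. Control protocol (C3): $x_i(t+1)=\Pi_{[0,1]}\big(\omega_ix_{\rm ave}(t)+\frac{1-\omega_i}{|\mathcal N_i(t)|}\sum_{j\in\mathcal N_i(t)}x_j(t)+u_i(t)+b_i(t)\big)$. Here $\delta_i(t)\in(0,\eta)$ is a chosen parameter, $u_i(t)\in[-\eta+\delta_i(t),\eta-\delta_i(t)]$ a chosen control input, $b_i(t)\in[-\delta_i(t),\delta_i(t)]$ an arbitrary uncertainty; $\delta_i(t),u_i(t)$ may depend on $x(0),\dots,x(t)$. A set $S\subseteq[0,1]^n$ is finite-time robustly reachable from $[0,1]^n$ under a control protocol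 if there exist constants $T>0$ and $\varepsilon\in(0,\eta)$, independent of $x(0)$, such that for every $x(0)\in[0,1]^n$, either $x(0)\in S$, or one can choose $\delta_i(t)\in[\varepsilon,\eta)$ and $u_i(t)\in[-\eta+\delta_i(t),\eta-\delta_i(t)]$ for $i\in\mathcal V$, $0\le t<T$, guaranteeing that for arbitrary $b_i(t)\in[-\delta_i(t),\delta_i(t)]$ there is $t\in[1,T]$ with $x(t)\in S$. *)

theory Defs
  imports Complex_Main
begin

text \<open>Agents are indexed by V = {1..n}; a state is a function nat => real whose
 values at indices outside {1..n} are irrelevant.\<close>

type_synonym state = "nat \<Rightarrow> real"

definition cube :: "nat \<Rightarrow> state set" where
  "cube n = {x. \<forall>i\<in>{1..n}. 0 \<le> x i \<and> x i \<le> 1}"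

definition nbr :: "nat \<Rightarrow> (nat \<Rightarrow> real) \<Rightarrow> state \<Rightarrow> nat \<Rightarrow> nat set" where
  "nbr n r x i = {j\<in>{1..n}. \<bar>x j - x i\<bar> \<le> r i}"

definition nbr_avg :: "nat \<Rightarrow> (nat \<Rightarrow> real) \<Rightarrow> state \<Rightarrow> nat \<Rightarrow> real" where
  "nbr_avg n r x i = (\<Sum>j\<in>nbr n r x i. x j) / real (card (nbr n r x i))"

definition xave :: "nat \<Rightarrow> state \<Rightarrow> real" where
  "xave n x = (\<Sum>i\<in>{1..n}. x i) / real n"

text \<open>Unprojected, uncontrolled parts of protocols (C1) and (C3).\<close>
definition C1 :: "nat \<Rightarrow> (nat \<Rightarrow> real) \<Rightarrow> state \<Rightarrow> state" where
  "C1 n r x = (\<lambda>i. nbr_avg n r x i)"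

definition C3 :: "nat \<Rightarrow> (nat \<Rightarrow> real) \<Rightarrow> (nat \<Rightarrow> real) \<Rightarrow> state \<Rightarrow> state" where
  "C3 n r \<omega> x = (\<lambda>i. \<omega> i * xave n x + (1 - \<omega> i) * nbr_avg n r x i)"

definition proj01 :: "real \<Rightarrow> real" where
  "proj01 y = min 1 (max 0 y)"

definition step :: "(state \<Rightarrow> state) \<Rightarrow> state \<Rightarrow> state \<Rightarrow> state \<Rightarrow> state" where
  "step F x u b = (\<lambda>i. proj01 (F x i + u i + b i))"

text \<open>A strategy maps the history [x(0),...,x(t)] to the pair (delta(t), u(t)).
 The noise b t i is b_i(t).  hist F sigma b x0 t = [x(0),...,x(t)].\<close>
primrec hist :: "(state \<Rightarrow> state) \<Rightarrow> (state list \<Rightarrow> state \<times> state)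
    \<Rightarrow> (nat \<Rightarrow> state) \<Rightarrow> state \<Rightarrow> nat \<Rightarrow> state list" where
  "hist F \<sigma> b x0 0 = [x0]"
| "hist F \<sigma> b x0 (Suc t) =
     hist F \<sigma> b x0 t @ [step F (last (hist F \<sigma> b x0 t)) (snd (\<sigma> (hist F \<sigma> b x0 t))) (b t)]"

definition traj :: "(state \<Rightarrow> state) \<Rightarrow> (state list \<Rightarrow> state \<times> state)
    \<Rightarrow> (nat \<Rightarrow> state) \<Rightarrow> state \<Rightarrow> nat \<Rightarrow> state" where
  "traj F \<sigma> b x0 t = last (hist F \<sigma> b x0 t)"

definition robustly_reachable ::
    "nat \<Rightarrow> real \<Rightarrow> (state \<Rightarrow> state) \<Rightarrow> state set \<Rightarrow> bool" where
  "robustly_reachable n \<eta> F S \<longleftrightarrow>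
     (\<exists>T::nat. T > 0 \<and> (\<exists>\<epsilon>::real. 0 < \<epsilon> \<and> \<epsilon> < \<eta> \<and>
       (\<forall>x0\<in>cube n. x0 \<in> S \<or>
         (\<exists>\<sigma>. (\<forall>h. \<forall>i\<in>{1..n}. \<epsilon> \<le> fst (\<sigma> h) i \<and> fst (\<sigma> h) i < \<eta> \<and>
                  - \<eta> + fst (\<sigma> h) i \<le> snd (\<sigma> h) i \<and> snd (\<sigma> h) i \<le> \<eta> - fst (\<sigma> h) i) \<and>
              (\<forall>b. (\<forall>t<T. \<forall>i\<in>{1..n}. - fst (\<sigma> (hist F \<sigma> b x0 t)) i \<le> b t i \<and>
                                     b t i \<le> fst (\<sigma> (hist F \<sigma> b x0 t)) i)
                   \<longrightarrow> (\<exists>t\<in>{1..T}. traj F \<sigma> b x0 t \<in> S))))))"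

definition Sz :: "nat \<Rightarrow> real \<Rightarrow> real \<Rightarrow> state set" where
  "Sz n z \<alpha> = {x \<in> cube n. Max ((\<lambda>i. \<bar>x i - z\<bar>) ` {1..n}) < \<alpha>}"

end

theory Submission
  imports Defs
begin

lemma avg_bound:
  fixes x :: "nat \<Rightarrow> real"
  assumes "finite A" "A \<noteq> {}" "\<forall>j\<in>A. \<bar>x j - z\<bar> \<le> B"
  shows "\<bar>(\<Sum>j\<in>A. x j) / real (card A) - z\<bar> \<le> B"
proof -
  have c: "real (card A) > 0" using assms by (simp add: card_gt_0_iff)
  have u: "(\<Sum>j\<in>A. x j) \<le> (\<Sum>j\<in>A. z + B)"
    using assms(3) by (intro sum_mono) (auto simp: abs_le_iff)
  have l: "(\<Sum>j\<in>A. z - B) \<le> (\<Sum>j\<in>A. x j)"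
    using assms(3) by (intro sum_mono) (auto simp: abs_le_iff)
  have u': "(\<Sum>j\<in>A. x j) / real (card A) \<le> z + B"
    using u c by (simp add: divide_le_eq mult.commute)
  have l': "z - B \<le> (\<Sum>j\<in>A. x j) / real (card A)"
    using l c by (simp add: le_divide_eq mult.commute)
  show ?thesis using u' l' by (simp add: abs_le_iff)
qed

lemma nbr_avg_bound:
  assumes "\<forall>i\<in>{1..n}. 0 < r i" "i \<in> {1..n}" "\<forall>j\<in>{1..n}. \<bar>x j - z\<bar> \<le> B"
  shows "\<bar>nbr_avg n r x i - z\<bar> \<le> B"
proof -
  have "i \<in> nbr n r x i" using assms(1,2) unfolding nbr_def by force
  moreover have "nbr n r x i \<subseteq> {1..n}" unfolding nbr_def by auto
  ultimately show ?thesis unfolding nbr_avg_def using assms(3)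
    by (intro avg_bound) (auto intro: finite_subset)
qed

lemma xave_bound:
  assumes "n \<ge> 1" "\<forall>j\<in>{1..n}. \<bar>x j - z\<bar> \<le> B"
  shows "\<bar>xave n x - z\<bar> \<le> B"
  using avg_bound[of "{1..n}" x z B] assms unfolding xave_def by auto

lemma step_bound:
  fixes y z u b B c e :: real
  assumes "0 \<le> z" "z \<le> 1" "\<bar>y - z\<bar> \<le> B" "u = max (- c) (min c (z - y))"
    "\<bar>b\<bar> \<le> e" "0 \<le> c"
  shows "\<bar>proj01 (y + u + b) - z\<bar> \<le> max e (B - c + e)"
  using assms unfolding proj01_def by (auto simp: abs_le_iff max_def min_def)

lemma reach_gen:
  fixes F :: "state \<Rightarrow> state"
  assumes n: "n \<ge> 1" and eta: "\<eta> > 0" and z: "0 \<le> z" "z \<le> 1" and al: "\<alpha> > 0"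
    and FP: "\<And>x B. \<forall>j\<in>{1..n}. \<bar>x j - z\<bar> \<le> B \<Longrightarrow> \<forall>i\<in>{1..n}. \<bar>F x i - z\<bar> \<le> B"
  shows "robustly_reachable n \<eta> F (Sz n z \<alpha>)"
proof -
  define e where "e = min (\<eta>/4) (\<alpha>/2)"
  define c where "c = \<eta> - e"
  define T where "T = nat \<lceil>2/\<eta>\<rceil> + 1"
  define \<sigma> where "\<sigma> = (\<lambda>h::state list. ((\<lambda>i::nat. e),
                   (\<lambda>i. max (- c) (min c (z - F (last h) i)))))"
  have e0: "0 < e" "e < \<eta>" "e \<le> \<eta>/4" "e < \<alpha>" using eta al by (auto simp: e_def)
  have c0: "0 \<le> c" "c - e \<ge> \<eta>/2" using e0 by (auto simp: c_def)
  have T0: "T > 0" by (simp add: T_def)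
  have TT: "1 - real T * \<eta> / 2 \<le> 0"
  proof -
    have "2/\<eta> \<le> real T" unfolding T_def by linarith
    hence "2 \<le> real T * \<eta>" using eta by (simp add: divide_le_eq)
    thus ?thesis by simp
  qed
  have main: "\<exists>\<sigma>. (\<forall>h. \<forall>i\<in>{1..n}. e \<le> fst (\<sigma> h) i \<and> fst (\<sigma> h) i < \<eta> \<and>
                  - \<eta> + fst (\<sigma> h) i \<le> snd (\<sigma> h) i \<and> snd (\<sigma> h) i \<le> \<eta> - fst (\<sigma> h) i) \<and>
              (\<forall>b. (\<forall>t<T. \<forall>i\<in>{1..n}. - fst (\<sigma> (hist F \<sigma> b x0 t)) i \<le> b t i \<and>
                                     b t i \<le> fst (\<sigma> (hist F \<sigma> b x0 t)) i)
                   \<longrightarrow> (\<exists>t\<in>{1..T}. traj F \<sigma> b x0 t \<in> Sz n z \<alpha>))"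
    if x0: "x0 \<in> cube n" for x0
  proof (intro exI[of _ \<sigma>] conjI allI impI)
    show "\<forall>i\<in>{1..n}. e \<le> fst (\<sigma> h) i \<and> fst (\<sigma> h) i < \<eta> \<and>
                  - \<eta> + fst (\<sigma> h) i \<le> snd (\<sigma> h) i \<and> snd (\<sigma> h) i \<le> \<eta> - fst (\<sigma> h) i" for h
      using e0 c0 by (auto simp: \<sigma>_def c_def)
  next
    fix b
    assume hb: "\<forall>t<T. \<forall>i\<in>{1..n}. - fst (\<sigma> (hist F \<sigma> b x0 t)) i \<le> b t i \<and>
                                     b t i \<le> fst (\<sigma> (hist F \<sigma> b x0 t)) i"
    have inv: "t \<le> T \<Longrightarrow> traj F \<sigma> b x0 t \<in> cube n \<and>
       (\<forall>i\<in>{1..n}. \<bar>traj F \<sigma> b x0 t i - z\<bar> \<le> max e (1 - real t * \<eta> / 2))" for t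
    proof (induction t)
      case 0
      then show ?case using x0 z by (auto simp: traj_def cube_def abs_le_iff)
    next
      case (Suc t)
      let ?x = "traj F \<sigma> b x0 t"
      have IH: "\<forall>i\<in>{1..n}. \<bar>?x i - z\<bar> \<le> max e (1 - real t * \<eta> / 2)"
        using Suc by auto
      have Fb: "\<forall>i\<in>{1..n}. \<bar>F ?x i - z\<bar> \<le> max e (1 - real t * \<eta> / 2)"
        using FP IH by blast
      have eq: "traj F \<sigma> b x0 (Suc t) = step F ?x (snd (\<sigma> (hist F \<sigma> b x0 t))) (b t)"
        by (simp add: traj_def)
      have sn: "snd (\<sigma> (hist F \<sigma> b x0 t)) = (\<lambda>i. max (- c) (min c (z - F ?x i)))"
        by (simp add: \<sigma>_def traj_def)
      have bt: "\<forall>i\<in>{1..n}. \<bar>b t i\<bar> \<le> e"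
      proof
        fix i assume i: "i \<in> {1..n}"
        have "t < T" using Suc.prems by simp
        hence "- e \<le> b t i \<and> b t i \<le> e" using hb i by (simp add: \<sigma>_def)
        thus "\<bar>b t i\<bar> \<le> e" by (simp add: abs_le_iff)
      qed
      have cube: "traj F \<sigma> b x0 (Suc t) \<in> cube n"
        unfolding eq step_def cube_def proj01_def by auto
      have "\<forall>i\<in>{1..n}. \<bar>traj F \<sigma> b x0 (Suc t) i - z\<bar> \<le> max e (1 - real (Suc t) * \<eta> / 2)"
      proof
        fix i assume i: "i \<in> {1..n}"
        have "\<bar>traj F \<sigma> b x0 (Suc t) i - z\<bar> \<le> max e (max e (1 - real t * \<eta> / 2) - c + e)"
          unfolding eq step_def sn
          by (rule step_bound) (use z Fb i bt c0 in auto)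
        also have "\<dots> \<le> max e (1 - real (Suc t) * \<eta> / 2)"
        proof -
          have "max e (max e (1 - real t * \<eta> / 2) - c + e) \<le> max e (1 - real t * \<eta> / 2 - \<eta>/2)"
            using c0 e0 eta by (simp add: max_def)
          also have "1 - real t * \<eta> / 2 - \<eta>/2 = 1 - real (Suc t) * \<eta> / 2"
            by (simp add: algebra_simps)
          finally show ?thesis .
        qed
        finally show "\<bar>traj F \<sigma> b x0 (Suc t) i - z\<bar> \<le> max e (1 - real (Suc t) * \<eta> / 2)" .
      qed
      with cube show ?case by blast
    qed
    have fin: "\<forall>i\<in>{1..n}. \<bar>traj F \<sigma> b x0 T i - z\<bar> < \<alpha>"
    proof
      fix i assume "i \<in> {1..n}"
      hence "\<bar>traj F \<sigma> b x0 T i - z\<bar> \<le> max e (1 - real T * \<eta> / 2)" using inv by auto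
      also have "\<dots> = e" using TT e0 by simp
      finally show "\<bar>traj F \<sigma> b x0 T i - z\<bar> < \<alpha>" using e0 by simp
    qed
    have "traj F \<sigma> b x0 T \<in> Sz n z \<alpha>"
      unfolding Sz_def using inv[of T] fin n by (auto simp: Max_less_iff)
    thus "\<exists>t\<in>{1..T}. traj F \<sigma> b x0 t \<in> Sz n z \<alpha>" using T0 by force
  qed
  show ?thesis unfolding robustly_reachable_def
    using T0 e0 main by blast
qed

theorem lemma2:
  fixes n :: nat and r \<omega> :: "nat \<Rightarrow> real" and \<eta> z \<alpha> :: real
  assumes "n \<ge> 3"
    and "\<forall>i\<in>{1..n}. 0 < r i \<and> r i \<le> 1"
    and "\<forall>i\<in>{1..n}. 0 < \<omega> i \<and> \<omega> i < 1"
    and "\<eta> > 0"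
    and "0 \<le> z" and "z \<le> 1" and "\<alpha> > 0"
  shows "robustly_reachable n \<eta> (C1 n r) (Sz n z \<alpha>) \<and>
         robustly_reachable n \<eta> (C3 n r \<omega>) (Sz n z \<alpha>)"
proof
  have n: "n \<ge> 1" using assms(1) by simp
  have r: "\<forall>i\<in>{1..n}. 0 < r i" using assms(2) by auto
  show "robustly_reachable n \<eta> (C1 n r) (Sz n z \<alpha>)"
    using assms(4-7) n by (intro reach_gen) (auto simp: C1_def intro: nbr_avg_bound[OF r])
  show "robustly_reachable n \<eta> (C3 n r \<omega>) (Sz n z \<alpha>)"
  proof (intro reach_gen n assms(4-7) ballI)
    fix x B i assume h: "\<forall>j\<in>{1..n}. \<bar>x j - z\<bar> \<le> B" and i: "i \<in> {1..n}"
    have a: "\<bar>xave n x - z\<bar> \<le> B" using xave_bound[OF n h] .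
    have b: "\<bar>nbr_avg n r x i - z\<bar> \<le> B" using nbr_avg_bound[OF r i h] .
    have w: "0 < \<omega> i" "\<omega> i < 1" using assms(3) i by auto
    have "C3 n r \<omega> x i - z = \<omega> i * (xave n x - z) + (1 - \<omega> i) * (nbr_avg n r x i - z)"
      by (simp add: C3_def algebra_simps)
    also have "\<bar>\<dots>\<bar> \<le> \<omega> i * B + (1 - \<omega> i) * B"
      using a b w by (intro order_trans[OF abs_triangle_ineq] add_mono)
        (auto simp: abs_mult intro: mult_left_mono)
    finally show "\<bar>C3 n r \<omega> x i - z\<bar> \<le> B" by (simp add: algebra_simps)
  qed
qed

end
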